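(* Let $d\ge1$, let $\Omega\subset\mathbb{R}^d$ be a bounded open set with $\partial\Omega\in C^{1,1}$, let $s\in(0,1)$, and let $\delta$ satisfy assumption $(\mathrm{A}_\delta^\sigma)$ with $\sigma=1$. Let $\mathcal T_h$ be an over-triangulation of $\Omega$ and $V_h$ the associated weighted finite element space. Then $V_h\subset V$.
   Context: $H^s(\mathbb{R}^d)=\{w\in L^2(\mathbb{R}^d): [w]_{H^s(\mathbb{R}^d)}<\infty\}$ where $[w]_{H^s(\mathbb{R}^d)}^2=\frac{C_{d,s}}{2}\iint\frac{|w(x)-w(y)|^2}{|x-y|^{d+2s}}dx\,dy$ (with $C_{d,s}=\frac{4^s\Gamma(d/2+s)}{\pi^{d/2}|\Gamma(-s)|}$), and $V=\{w\in H^s(\mathbb{R}^d): w=0\text{ in }\mathbb{R}^d\setminus\Omega\}$. $W^{\alpha,\infty}(\Omega):=C^{\lceil\alpha\rceil-1,\alpha-\lceil\alpha\rceil+1}(\overline\Omega)$ (so $W^{1,\infty}(\Omega)$ = Lipschitz functions on $\overline\Omega$). $d_\Omega(x)=\mathrm{dist}(x,\mathbb{R}^d\setminus\Omega)$. Assumption $(\mathrm{A}_\delta^\sigma)$: $\delta:\mathbb{R}^d\to[0,\infty)$, $\delta\in C^\infty(\Omega)\cap W^{\sigma,\infty}(\Omega)$, $\frac1c d_\Omega\le\delta\le c\,d_\Omega$ in $\mathbb{R}^d$, and $|D^j\delta|\le c_j\delta^{\sigma-|j|}$ in $\Omega$ for all multi-indices $|j|>\sigma$. Over-triangulation $\mathcal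 T_h$: finite set of simplices with $\overline\Omega\subset\bigcup_K\overline K$, each $\overline K$ meeting $\overline\Omega$, shape regular, uniform ($c_1h\le\mathrm{diam}K\le c_2h$), conforming. $\Omega_h=\mathrm{interior}(\bigcup_K\overline K)$, $PL(\mathcal T_h)=\{w\in C(\overline{\Omega_h}): w|_K\text{ linear for all }K\}$, $V_h=\{v:\mathbb{R}^d\to\mathbb{R}: v|_\Omega=\delta^s\varphi\text{ for some }\varphi\in PL(\mathcal T_h),\ v=0\text{ in }\mathbb{R}^d\setminus\Omega\}$. *)

theory Defs
  imports "HOL-Analysis.Analysis"
begin

definition C11_fun :: "('a::euclidean_space \<Rightarrow> real) \<Rightarrow> bool" where
  "C11_fun g \<longleftrightarrow> (\<exists>G L. (\<forall>x. (g has_derivative (\<lambda>h. G x \<bullet> h)) (at x)) \<and>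
                          (\<forall>x y. norm (G x - G y) \<le> L * norm (x - y)))"

text \<open>Omega has a C^{1,1} boundary: near each boundary point, after choosing a unit
direction e (i.e. a rotation of coordinates), Omega is the subgraph of a C^{1,1} function
of the coordinates orthogonal to e.\<close>
definition C11_boundary :: "'a::euclidean_space set \<Rightarrow> bool" where
  "C11_boundary \<Omega> \<longleftrightarrow>
     (\<forall>x0\<in>frontier \<Omega>. \<exists>r e \<gamma>. r > 0 \<and> norm e = 1 \<and> C11_fun \<gamma> \<and>
        \<Omega> \<inter> ball x0 r = {x \<in> ball x0 r. x \<bullet> e < \<gamma> (x - (x \<bullet> e) *\<^sub>R e)})"

definition C_ds :: "nat \<Rightarrow> real \<Rightarrow> real" where
  "C_ds d s = 4 powr s * Gamma (real d / 2 + s) / (pi powr (real d / 2) * \<bar>Gamma (- s)\<bar>)"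

definition Hs_seminorm_sq :: "real \<Rightarrow> ('a::euclidean_space \<Rightarrow> real) \<Rightarrow> ennreal" where
  "Hs_seminorm_sq s w =
     ennreal (C_ds DIM('a) s / 2) *
     (\<integral>\<^sup>+ z. ennreal ((w (fst z) - w (snd z))\<^sup>2 /
                     norm (fst z - snd z) powr (real DIM('a) + 2 * s))
        \<partial>(lebesgue \<Otimes>\<^sub>M lebesgue))"

definition Hs :: "real \<Rightarrow> ('a::euclidean_space \<Rightarrow> real) set" where
  "Hs s = {w. w \<in> borel_measurable lebesgue \<and>
              (\<integral>\<^sup>+ x. ennreal ((w x)\<^sup>2) \<partial>lebesgue) < \<infinity> \<and>
              Hs_seminorm_sq s w < \<infinity>}"

definition Vspace :: "real \<Rightarrow> 'a::euclidean_space set \<Rightarrow> ('a \<Rightarrow> real) set" where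
  "Vspace s \<Omega> = {w \<in> Hs s. \<forall>x. x \<notin> \<Omega> \<longrightarrow> w x = 0}"

definition d_Omega :: "'a::euclidean_space set \<Rightarrow> 'a \<Rightarrow> real" where
  "d_Omega \<Omega> x = infdist x (- \<Omega>)"

text \<open>Partial derivative along basis vector i, and iterated partial derivatives
(a list of basis vectors encodes a multi-index; its length is the order).\<close>
definition pderiv_dir :: "'a::euclidean_space \<Rightarrow> ('a \<Rightarrow> real) \<Rightarrow> ('a \<Rightarrow> real)" where
  "pderiv_dir i f = (\<lambda>x. frechet_derivative f (at x) i)"

fun iter_pderiv :: "'a::euclidean_space list \<Rightarrow> ('a \<Rightarrow> real) \<Rightarrow> ('a \<Rightarrow> real)" where
  "iter_pderiv [] f = f"
| "iter_pderiv (i # is) f = pderiv_dir i (iter_pderiv is f)"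

definition smooth_on_set :: "'a::euclidean_space set \<Rightarrow> ('a \<Rightarrow> real) \<Rightarrow> bool" where
  "smooth_on_set U f \<longleftrightarrow>
     (\<forall>is \<in> lists Basis. \<forall>x\<in>U. iter_pderiv is f differentiable (at x))"

text \<open>Assumption (A_delta^sigma) with sigma = 1; W^{1,infty}(Omega) = Lipschitz functions
on the closure of Omega.\<close>
definition assumption_A_delta_1 :: "'a::euclidean_space set \<Rightarrow> ('a \<Rightarrow> real) \<Rightarrow> bool" where
  "assumption_A_delta_1 \<Omega> \<delta> \<longleftrightarrow>
     (\<forall>x. \<delta> x \<ge> 0) \<and>
     smooth_on_set \<Omega> \<delta> \<and>
     (\<exists>L. L-lipschitz_on (closure \<Omega>) \<delta>) \<and>
     (\<exists>c>0. \<forall>x. d_Omega \<Omega> x / c \<le> \<delta> x \<and> \<delta> x \<le> c * d_Omega \<Omega> x) \<and>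
     (\<forall>is \<in> lists Basis. length is > 1 \<longrightarrow>
        (\<exists>cj. \<forall>x\<in>\<Omega>. \<bar>iter_pderiv is \<delta> x\<bar> \<le> cj * \<delta> x powr (1 - real (length is))))"

text \<open>A simplex is given by its vertex set: DIM+1 affinely independent points;
the (closed) simplex is its convex hull.\<close>
definition is_simplex_vertices :: "'a::euclidean_space set \<Rightarrow> bool" where
  "is_simplex_vertices S \<longleftrightarrow> finite S \<and> card S = DIM('a) + 1 \<and> \<not> affine_dependent S"

definition simplices_of :: "'a::euclidean_space set set \<Rightarrow> 'a set set" where
  "simplices_of T = (\<lambda>S. convex hull S) ` T"

definition over_triangulation :: "'a::euclidean_space set \<Rightarrow> real \<Rightarrow> 'a set set \<Rightarrow> bool" where
  "over_triangulation \<Omega> h T \<longleftrightarrow>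
     finite T \<and> (\<forall>S\<in>T. is_simplex_vertices S) \<and>
     closure \<Omega> \<subseteq> \<Union> (simplices_of T) \<and>
     (\<forall>S\<in>T. convex hull S \<inter> closure \<Omega> \<noteq> {}) \<and>
     \<comment> \<open>shape regularity: each simplex contains a ball of radius diam K / c\<close>
     (\<exists>c>0. \<forall>S\<in>T. \<exists>z. ball z (diameter (convex hull S) / c) \<subseteq> convex hull S) \<and>
     \<comment> \<open>uniformity\<close>
     (\<exists>c1 c2. c1 > 0 \<and> c2 > 0 \<and>
        (\<forall>S\<in>T. c1 * h \<le> diameter (convex hull S) \<and> diameter (convex hull S) \<le> c2 * h)) \<and>
     \<comment> \<open>conformity: two simplices meet in the common face spanned by shared vertices\<close>
     (\<forall>S\<in>T. \<forall>S'\<in>T. convex hull S \<inter> convex hull S' = convex hull (S \<inter> S'))"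

definition Omega_h :: "'a::euclidean_space set set \<Rightarrow> 'a set" where
  "Omega_h T = interior (\<Union> (simplices_of T))"

definition PL :: "'a::euclidean_space set set \<Rightarrow> ('a \<Rightarrow> real) set" where
  "PL T = {w. continuous_on (closure (Omega_h T)) w \<and>
              (\<forall>K\<in>simplices_of T. \<exists>a b. \<forall>x\<in>K. w x = a \<bullet> x + b)}"

definition Vh :: "real \<Rightarrow> 'a::euclidean_space set \<Rightarrow> ('a \<Rightarrow> real) \<Rightarrow> 'a set set \<Rightarrow> ('a \<Rightarrow> real) set" where
  "Vh s \<Omega> \<delta> T = {v. (\<exists>\<phi>\<in>PL T. \<forall>x\<in>\<Omega>. v x = \<delta> x powr s * \<phi> x) \<and>
                     (\<forall>x. x \<notin> \<Omega> \<longrightarrow> v x = 0)}"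

end

theory Submission
  imports Defs
begin

lemma emeasure_lebesgue_cball:
  fixes x :: "'a::euclidean_space"
  assumes "R \<ge> 0"
  shows "emeasure lebesgue (cball x R) = ennreal (unit_ball_vol DIM('a) * R ^ DIM('a))"
  using emeasure_cball[OF assms, of x] by (simp add: emeasure_completion)

lemma ennreal_term_le_suminf: "(f k :: ennreal) \<le> (\<Sum>i. f i)"
  by (metis ennreal_suminf_lessD not_le order_refl)

lemma int_const_cball:
  fixes x :: "'a::euclidean_space"
  assumes "R \<ge> 0"
  shows "(\<integral>\<^sup>+y. indicator (cball x R) y * ennreal c \<partial>lebesgue) = ennreal c * ennreal (unit_ball_vol DIM('a) * R ^ DIM('a))"
proof -
  have "(\<integral>\<^sup>+y. indicator (cball x R) y * ennreal c \<partial>lebesgue) = (\<integral>\<^sup>+y. ennreal c * indicator (cball x R) y \<partial>lebesgue)"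
    by (simp add: mult.commute)
  also have "\<dots> = ennreal c * emeasure lebesgue (cball x R)"
    by (rule nn_integral_cmult_indicator) simp
  finally show ?thesis using emeasure_lebesgue_cball[OF assms, of x] by simp
qed

lemma exists_dyadic:
  fixes q :: real assumes "q \<ge> 1"
  shows "\<exists>k::nat. 2^k \<le> q \<and> q < 2^(k+1)"
proof -
  obtain n :: nat where n: "q < 2^n" using real_arch_pow[of 2 q] by auto
  define m where "m = (LEAST n::nat. q < 2^n)"
  have m: "q < 2^m" unfolding m_def by (rule LeastI[of _ n]) (rule n)
  have "m \<noteq> 0" using m assms by (cases m) auto
  then obtain k where k: "m = Suc k" by (cases m) auto
  have "\<not> q < 2^k" using k unfolding m_def by (metis Least_le lessI not_le)
  then show ?thesis using m k by (intro exI[of _ k]) auto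
qed

lemma shell_sum_bound:
  fixes x :: "'a::euclidean_space"
  assumes "\<And>y. f y \<le> (\<Sum>k. indicator (cball x (R k)) y * ennreal (c k))" "\<And>k. R k \<ge> 0"
  shows "(\<integral>\<^sup>+y. f y \<partial>lebesgue) \<le> (\<Sum>k. ennreal (c k) * ennreal (unit_ball_vol DIM('a) * R k ^ DIM('a)))"
proof -
  have "(\<integral>\<^sup>+y. f y \<partial>lebesgue) \<le> (\<integral>\<^sup>+y. (\<Sum>k. indicator (cball x (R k)) y * ennreal (c k)) \<partial>lebesgue)"
    by (rule nn_integral_mono) (rule assms(1))
  also have "\<dots> = (\<Sum>k. (\<integral>\<^sup>+y. indicator (cball x (R k)) y * ennreal (c k) \<partial>lebesgue))"
    proof (rule nn_integral_suminf)
    fix k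
    have "cball x (R k) \<in> sets lebesgue" by simp
    then show "(\<lambda>y. indicator (cball x (R k)) y * ennreal (c k)) \<in> borel_measurable lebesgue" by measurable
  qed
  also have "\<dots> = (\<Sum>k. ennreal (c k) * ennreal (unit_ball_vol DIM('a) * R k ^ DIM('a)))"
    by (intro suminf_cong int_const_cball assms(2))
  finally show ?thesis .
qed

lemma geom_ennreal:
  fixes C q :: real assumes "C \<ge> 0" "0 \<le> q" "q < 1"
  shows "(\<Sum>k. ennreal (C * q^k)) = ennreal (C / (1 - q))"
proof -
  have s: "summable (\<lambda>k. C * q^k)" using assms by (intro summable_mult summable_geometric) auto
  have "(\<Sum>k. ennreal (C * q^k)) = ennreal (\<Sum>k. C * q^k)"
    using assms s by (intro suminf_ennreal2) auto
  also have "(\<Sum>k. C * q^k) = C / (1 - q)"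
    using suminf_mult[OF summable_geometric[of q], of C] suminf_geometric[of q] assms
    by (simp add: divide_simps)
  finally show ?thesis .
qed

lemma pow2_powr_neg: "((2::real)^k) powr (-t) = ((1/2) powr t)^k"
proof -
  have "((2::real)^k) powr (-t) = (2 powr (-t))^k"
    by (simp add: powr_realpow[symmetric] powr_powr mult.commute powr_power)
  also have "2 powr (-t) = (1/2::real) powr t" by (simp add: powr_minus_divide powr_divide)
  finally show ?thesis .
qed

lemma half_powr_lt1: "t > 0 \<Longrightarrow> (1/2::real) powr t < 1"
  using powr_less_mono2[of t "1/2" 1] by simp

lemma outer_int:
  fixes x :: "'a::euclidean_space"
  assumes "\<rho> > 0" "t > 0"
  shows "(\<integral>\<^sup>+y. indicator (- ball x \<rho>) y * ennreal (dist x y powr (-(real DIM('a) + t))) \<partial>lebesgue)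
     \<le> ennreal (unit_ball_vol DIM('a) * 2^DIM('a) * \<rho> powr (-t) / (1 - (1/2) powr t))"
proof -
  define D where "D = DIM('a)"
  define R where "R k = \<rho> * 2^(k+1)" for k :: nat
  define c where "c k = (\<rho> * 2^k) powr (-(real D + t))" for k :: nat
  define \<omega> where "\<omega> = unit_ball_vol D"
  have \<omega>: "\<omega> \<ge> 0" unfolding \<omega>_def by simp
  have pw: "indicator (- ball x \<rho>) y * ennreal (dist x y powr (-(real DIM('a) + t)))
        \<le> (\<Sum>k. indicator (cball x (R k)) y * ennreal (c k))" for y
  proof (cases "dist x y < \<rho>")
    case True then show ?thesis by simp
  next
    case False
    then obtain k :: nat where k: "2^k \<le> dist x y / \<rho>" "dist x y / \<rho> < 2^(k+1)"
      using exists_dyadic[of "dist x y / \<rho>"] assms by auto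
    have k1: "\<rho> * 2^k \<le> dist x y" using k assms by (simp add: field_simps)
    have k2: "dist x y \<le> R k" using k assms unfolding R_def by (simp add: field_simps)
    have "dist x y powr (-(real D + t)) \<le> c k"
      unfolding c_def using k1 assms by (intro powr_mono2') auto
    then have "indicator (- ball x \<rho>) y * ennreal (dist x y powr (-(real DIM('a) + t)))
        \<le> indicator (cball x (R k)) y * ennreal (c k)"
      using k2 False by (simp add: D_def indicator_def ennreal_leI)
    also have "\<dots> \<le> (\<Sum>k. indicator (cball x (R k)) y * ennreal (c k))"
      by (rule ennreal_term_le_suminf)
    finally show ?thesis .
  qed
  have "(\<integral>\<^sup>+y. indicator (- ball x \<rho>) y * ennreal (dist x y powr (-(real DIM('a) + t))) \<partial>lebesgue)
      \<le> (\<Sum>k. ennreal (c k) * ennreal (unit_ball_vol DIM('a) * R k ^ DIM('a)))"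
    by (rule shell_sum_bound[OF pw]) (use assms in \<open>simp add: R_def\<close>)
  also have "\<dots> = (\<Sum>k. ennreal ((\<omega> * 2^D * \<rho> powr (-t)) * ((1/2) powr t)^k))"
  proof (rule suminf_cong)
    fix k :: nat
    have p: "\<rho> * 2^k > 0" using assms by simp
    have "c k * (\<omega> * R k ^ D) = \<omega> * 2^D * ((\<rho> * 2^k) powr (-(real D + t)) * (\<rho> * 2^k) powr real D)"
      unfolding c_def R_def using p by (simp add: powr_realpow power_mult_distrib)
    also have "(\<rho> * 2^k) powr (-(real D + t)) * (\<rho> * 2^k) powr real D = (\<rho> * 2^k) powr (-t)"
      by (simp add: powr_add[symmetric])
    also have "\<dots> = \<rho> powr (-t) * ((1/2) powr t)^k"
      using assms by (simp add: powr_mult pow2_powr_neg)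
    finally have e: "c k * (\<omega> * R k ^ D) = (\<omega> * 2^D * \<rho> powr (-t)) * ((1/2) powr t)^k"
      by simp
    have "c k \<ge> 0" unfolding c_def by simp
    moreover have "R k ^ D \<ge> 0" using assms unfolding R_def by simp
    ultimately have "ennreal (c k) * ennreal (\<omega> * R k ^ D) = ennreal (c k * (\<omega> * R k ^ D))"
      using \<omega> by (simp add: ennreal_mult)
    then show "ennreal (c k) * ennreal (unit_ball_vol DIM('a) * R k ^ DIM('a)) = ennreal ((\<omega> * 2^D * \<rho> powr (-t)) * ((1/2) powr t)^k)"
      using e by (simp only: \<omega>_def D_def)
  qed
  also have "\<dots> = ennreal ((\<omega> * 2^D * \<rho> powr (-t)) / (1 - (1/2) powr t))"
    using assms \<omega> by (intro geom_ennreal) (auto simp: half_powr_lt1)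
  finally show ?thesis by (simp add: \<omega>_def D_def)
qed

lemma inner_int:
  fixes x :: "'a::euclidean_space"
  assumes "\<rho> > 0" "e + real DIM('a) > 0"
  shows "(\<integral>\<^sup>+y. indicator (ball x \<rho>) y * ennreal (dist x y powr e) \<partial>lebesgue)
     \<le> ennreal (2 powr \<bar>e\<bar> * unit_ball_vol DIM('a) * \<rho> powr (e + real DIM('a)) / (1 - (1/2) powr (e + real DIM('a))))"
proof -
  define D where "D = DIM('a)"
  define a where "a = e + real D"
  have a: "a > 0" using assms unfolding a_def D_def by simp
  define R where "R k = \<rho> / 2^k" for k :: nat
  define c where "c k = 2 powr \<bar>e\<bar> * (\<rho> / 2^k) powr e" for k :: nat
  define \<omega> where "\<omega> = unit_ball_vol D"
  have \<omega>: "\<omega> \<ge> 0" unfolding \<omega>_def by simp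
  have pw: "indicator (ball x \<rho>) y * ennreal (dist x y powr e)
        \<le> (\<Sum>k. indicator (cball x (R k)) y * ennreal (c k))" for y
  proof (cases "dist x y < \<rho> \<and> y \<noteq> x")
    case False then show ?thesis by auto
  next
    case True
    then have dpos: "dist x y > 0" by auto
    then obtain k :: nat where k: "2^k \<le> \<rho> / dist x y" "\<rho> / dist x y < 2^(k+1)"
      using exists_dyadic[of "\<rho> / dist x y"] True by auto
    have k1: "dist x y \<le> R k" using k dpos unfolding R_def by (simp add: field_simps)
    have k2: "\<rho> / 2^(k+1) < dist x y" using k dpos assms by (simp add: field_simps)
    have Rk: "R k > 0" unfolding R_def using assms by simp
    have "dist x y powr e \<le> c k"
    proof (cases "e \<ge> 0")
      case True
      have "dist x y powr e \<le> (\<rho> / 2^k) powr e" using k1 True dpos unfolding R_def by (intro powr_mono2) auto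
      also have "\<dots> \<le> 2 powr \<bar>e\<bar> * (\<rho> / 2^k) powr e"
        using ge_one_powr_ge_zero[of 2 "\<bar>e\<bar>"] powr_ge_zero[of "\<rho>/2^k" e] by (simp add: mult_le_cancel_right1)
      finally show ?thesis unfolding c_def .
    next
      case False
      have "dist x y powr e \<le> (\<rho> / 2^(k+1)) powr e" using k2 False assms by (intro powr_mono2') auto
      also have "(\<rho> / 2^(k+1)) powr e = (\<rho> / 2^k) powr e * 2 powr (-e)"
        using assms by (simp add: powr_divide powr_minus_divide powr_mult field_simps)
      also have "\<dots> = 2 powr \<bar>e\<bar> * (\<rho> / 2^k) powr e" using False by simp
      finally show ?thesis unfolding c_def .
    qed
    then have "indicator (ball x \<rho>) y * ennreal (dist x y powr e)
        \<le> indicator (cball x (R k)) y * ennreal (c k)"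
      using k1 True by (simp add: indicator_def ennreal_leI)
    also have "\<dots> \<le> (\<Sum>k. indicator (cball x (R k)) y * ennreal (c k))"
      by (rule ennreal_term_le_suminf)
    finally show ?thesis .
  qed
  have "(\<integral>\<^sup>+y. indicator (ball x \<rho>) y * ennreal (dist x y powr e) \<partial>lebesgue)
      \<le> (\<Sum>k. ennreal (c k) * ennreal (unit_ball_vol DIM('a) * R k ^ DIM('a)))"
    by (rule shell_sum_bound[OF pw]) (use assms in \<open>simp add: R_def\<close>)
  also have "\<dots> = (\<Sum>k. ennreal ((2 powr \<bar>e\<bar> * \<omega> * \<rho> powr a) * ((1/2) powr a)^k))"
  proof (rule suminf_cong)
    fix k :: nat
    have p: "\<rho> / 2^k > 0" using assms by simp
    have "c k * (\<omega> * R k ^ D) = 2 powr \<bar>e\<bar> * \<omega> * ((\<rho> / 2^k) powr e * (\<rho> / 2^k) powr real D)"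
      unfolding c_def R_def using p by (simp add: powr_realpow)
    also have "(\<rho> / 2^k) powr e * (\<rho> / 2^k) powr real D = (\<rho> / 2^k) powr a"
      by (simp add: powr_add[symmetric] a_def)
    also have "\<dots> = \<rho> powr a * ((1/2) powr a)^k"
      proof -
      have "((2::real)^k) powr a = (2 powr a)^k"
        by (simp add: powr_realpow[symmetric] powr_powr mult.commute powr_power)
      then show ?thesis using assms by (simp add: powr_divide power_one_over divide_simps)
    qed
    finally have e: "c k * (\<omega> * R k ^ D) = (2 powr \<bar>e\<bar> * \<omega> * \<rho> powr a) * ((1/2) powr a)^k"
      by simp
    have "c k \<ge> 0" unfolding c_def by simp
    moreover have "R k ^ D \<ge> 0" using assms unfolding R_def by simp
    ultimately have "ennreal (c k) * ennreal (\<omega> * R k ^ D) = ennreal (c k * (\<omega> * R k ^ D))"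
      using \<omega> by (simp add: ennreal_mult)
    then show "ennreal (c k) * ennreal (unit_ball_vol DIM('a) * R k ^ DIM('a)) = ennreal ((2 powr \<bar>e\<bar> * \<omega> * \<rho> powr a) * ((1/2) powr a)^k)"
      using e by (simp only: \<omega>_def D_def)
  qed
  also have "\<dots> = ennreal ((2 powr \<bar>e\<bar> * \<omega> * \<rho> powr a) / (1 - (1/2) powr a))"
    using assms \<omega> a by (intro geom_ennreal) (auto simp: half_powr_lt1)
  finally show ?thesis by (simp add: \<omega>_def D_def a_def)
qed

lemma sigma_finite_lebesgue: "sigma_finite_measure (lebesgue :: 'a::euclidean_space measure)"
proof
  show "\<exists>A::'a set set. countable A \<and> A \<subseteq> sets lebesgue \<and> \<Union>A = space lebesgue \<and> (\<forall>a\<in>A. emeasure lebesgue a \<noteq> \<infinity>)"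
  proof (intro exI[of _ "range (\<lambda>n::nat. cball 0 (real n))"] conjI)
    show "\<Union>(range (\<lambda>n::nat. cball (0::'a) (real n))) = space lebesgue"
      by (auto simp: real_arch_simple)
    show "\<forall>a\<in>range (\<lambda>n::nat. cball (0::'a) (real n)). emeasure lebesgue a \<noteq> \<infinity>"
    proof
      fix a assume "a \<in> range (\<lambda>n::nat. cball (0::'a) (real n))"
      then obtain n :: nat where a: "a = cball 0 (real n)" by auto
      have "emeasure lborel (cball (0::'a) (real n)) < \<infinity>" by (rule emeasure_bounded_finite) simp
      then show "emeasure lebesgue a \<noteq> \<infinity>" using a by simp
    qed
  qed auto
qed

lemma leb_pair: "pair_sigma_finite (lebesgue :: 'a::euclidean_space measure) (lebesgue :: 'a measure)"
  by (simp add: pair_sigma_finite.intro sigma_finite_lebesgue)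

lemma fst_leb[measurable]: "fst \<in> (lebesgue \<Otimes>\<^sub>M lebesgue) \<rightarrow>\<^sub>M (borel :: 'a::euclidean_space measure)"
    using measurable_comp[OF measurable_fst id_borel_measurable_lebesgue] by (simp add: comp_def id_def)
lemma snd_leb[measurable]: "snd \<in> (lebesgue \<Otimes>\<^sub>M lebesgue) \<rightarrow>\<^sub>M (borel :: 'a::euclidean_space measure)"
    using measurable_comp[OF measurable_snd id_borel_measurable_lebesgue] by (simp add: comp_def id_def)
lemma id_leb[measurable]: "(\<lambda>x. x) \<in> borel_measurable (lebesgue :: 'a::euclidean_space measure)"
  using id_borel_measurable_lebesgue by (simp add: id_def)

lemma meas_test:
  fixes v :: "'a::euclidean_space \<Rightarrow> real"
  assumes [measurable]: "v \<in> borel_measurable lebesgue"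
  shows "(\<lambda>z. ennreal ((v (fst z) - v (snd z))\<^sup>2 / norm (fst z - snd z) powr (real DIM('a) + 2 * s)))
     \<in> borel_measurable (lebesgue \<Otimes>\<^sub>M lebesgue)"
  by measurable

lemma meas_test2:
  fixes x :: "'a::euclidean_space"
  assumes [measurable]: "ball x r \<in> sets lebesgue"
  shows "(\<lambda>y. indicator (ball x r) y * ennreal (dist x y powr e)) \<in> borel_measurable lebesgue"
  by measurable

lemma lift_leb: "(G :: 'a::euclidean_space \<Rightarrow> 'b::topological_space) \<in> borel_measurable borel \<Longrightarrow> G \<in> borel_measurable lebesgue"
  using measurable_comp[OF id_borel_measurable_lebesgue, of G] by (simp add: comp_def id_def)

lemma D_meas[measurable]: "d_Omega \<Omega> \<in> borel_measurable (lebesgue :: 'a::euclidean_space measure)"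
proof -
  have "continuous_on UNIV (d_Omega \<Omega>)" unfolding d_Omega_def[abs_def]
    by (intro continuous_intros)
  then show ?thesis by (intro lift_leb borel_measurable_continuous_onI)
qed

lemma D_nonneg: "d_Omega \<Omega> x \<ge> 0" unfolding d_Omega_def by (rule infdist_nonneg)
lemma D_out: "x \<notin> \<Omega> \<Longrightarrow> d_Omega \<Omega> x = 0" unfolding d_Omega_def by simp
lemma D_lip: "\<bar>d_Omega \<Omega> x - d_Omega \<Omega> y\<bar> \<le> dist x y" unfolding d_Omega_def by (rule infdist_triangle_abs)
lemma D_pos:
  fixes \<Omega> :: "'a::euclidean_space set"
  assumes "open \<Omega>" "bounded \<Omega>" "x \<in> \<Omega>" shows "d_Omega \<Omega> x > 0"
proof -
  have "\<Omega> \<noteq> UNIV" using assms(2) not_bounded_UNIV by metis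
  then have "- \<Omega> \<noteq> {}" by auto
  then show ?thesis unfolding d_Omega_def using assms
    by (intro infdist_pos_not_in_closed) (auto simp: closed_Compl)
qed
lemma D_ball: "x \<in> \<Omega> \<Longrightarrow> dist x y < d_Omega \<Omega> x \<Longrightarrow> y \<in> \<Omega>"
  unfolding d_Omega_def using infdist_le[of y "- \<Omega>" x] by (cases "y \<in> \<Omega>") auto
lemma D_bounded:
  fixes \<Omega> :: "'a::euclidean_space set"
  assumes "bounded \<Omega>" shows "\<exists>M>0. \<forall>x. d_Omega \<Omega> x \<le> M"
proof -
  obtain B where B: "B > 0" "\<And>x. x \<in> \<Omega> \<Longrightarrow> norm x \<le> B" using assms bounded_pos by metis
  have "\<Omega> \<noteq> UNIV" using assms not_bounded_UNIV by metis
  then have "- \<Omega> \<noteq> {}" by auto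
  then obtain p where p: "p \<notin> \<Omega>" by auto
  have "d_Omega \<Omega> x \<le> B + norm p" for x
  proof (cases "x \<in> \<Omega>")
    case True
    have "d_Omega \<Omega> x \<le> dist x p" unfolding d_Omega_def using p by (intro infdist_le) auto
    also have "\<dots> \<le> norm x + norm p" by (simp add: dist_norm norm_triangle_ineq4)
    finally show ?thesis using B(2)[OF True] by linarith
  next
    case False then show ?thesis using B by (simp add: D_out)
  qed
  then show ?thesis using B norm_ge_zero[of p] by (intro exI[of _ "B + norm p"]) (auto simp del: norm_ge_zero)
qed

lemma pr1: "(r::real) > 0 \<Longrightarrow> r powr (-a) * (r/2) powr a = (1/2) powr a"
  by (simp add: powr_divide powr_minus divide_simps)
lemma pr2: "(r::real) > 0 \<Longrightarrow> r powr a * (r/2) powr (-a) = 2 powr a"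
  by (simp add: powr_divide powr_minus divide_simps)

lemma emeasure_open_bounded: "open (\<Omega>::'a::euclidean_space set) \<Longrightarrow> bounded \<Omega> \<Longrightarrow> emeasure lebesgue \<Omega> < \<infinity>"
  using emeasure_bounded_finite[of \<Omega>] by (simp add: emeasure_completion)

lemma Hs_abstract:
  fixes \<Omega> :: "'a::euclidean_space set" and v :: "'a \<Rightarrow> real"
  assumes \<Omega>o: "open \<Omega>" and \<Omega>b: "bounded \<Omega>" and s0: "0 < s" and s1: "s < 1"
    and vm[measurable]: "v \<in> borel_measurable lebesgue"
    and vz: "\<And>x. x \<notin> \<Omega> \<Longrightarrow> v x = 0"
    and A: "A \<ge> 0" and bnd: "\<And>y. \<bar>v y\<bar> \<le> A * d_Omega \<Omega> y powr s"
    and K: "K \<ge> 0"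
    and near: "\<And>x y. x \<in> \<Omega> \<Longrightarrow> dist x y < d_Omega \<Omega> x / 2 \<Longrightarrow>
                 \<bar>v x - v y\<bar> \<le> K * dist x y * d_Omega \<Omega> x powr (s - 1)"
  shows "v \<in> Hs s"
proof -
  define D where "D = d_Omega \<Omega>"
  define n where "n = real DIM('a)"
  obtain Dm where Dm: "Dm > 0" "\<And>x. D x \<le> Dm" using D_bounded[OF \<Omega>b] unfolding D_def by blast
  have Dnn: "D x \<ge> 0" for x unfolding D_def by (rule D_nonneg)
  have fin\<Omega>: "emeasure lebesgue \<Omega> < \<infinity>" by (rule emeasure_open_bounded[OF \<Omega>o \<Omega>b])
  have \<Omega>meas: "\<Omega> \<in> sets lebesgue" using \<Omega>o by simp
  have L2: "(\<integral>\<^sup>+x. ennreal ((v x)\<^sup>2) \<partial>lebesgue) < \<infinity>"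
  proof -
    define M where "M = (A * Dm powr s)\<^sup>2"
    have "ennreal ((v x)\<^sup>2) \<le> ennreal M * indicator \<Omega> x" for x
    proof (cases "x \<in> \<Omega>")
      case True
      have "A * D x powr s \<le> A * Dm powr s"
        using A Dm(2)[of x] Dnn[of x] s0 by (intro mult_left_mono powr_mono2) auto
      then have "\<bar>v x\<bar> \<le> A * Dm powr s" using bnd[of x] unfolding D_def by linarith
      then have "\<bar>v x\<bar>\<^sup>2 \<le> M" unfolding M_def by (intro power_mono) auto
      then show ?thesis using True by (simp add: ennreal_leI)
    next
      case False then show ?thesis using vz by simp
    qed
    then have "(\<integral>\<^sup>+x. ennreal ((v x)\<^sup>2) \<partial>lebesgue) \<le> (\<integral>\<^sup>+x. ennreal M * indicator \<Omega> x \<partial>lebesgue)"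
      by (intro nn_integral_mono) auto
    also have "\<dots> = ennreal M * emeasure lebesgue \<Omega>" by (rule nn_integral_cmult_indicator[OF \<Omega>meas])
    also have "\<dots> < \<infinity>" using fin\<Omega> by (simp add: ennreal_mult_less_top)
    finally show ?thesis .
  qed
  define F where "F x y = ennreal ((v x - v y)\<^sup>2 / norm (x - y) powr (n + 2 * s))" for x y
  define P where "P z = (if D (snd z) \<le> D (fst z) then F (fst z) (snd z) else 0)" for z
  define Q where "Q z = (if D (fst z) < D (snd z) then F (fst z) (snd z) else 0)" for z
  have Dmeas[measurable]: "D \<in> borel_measurable lebesgue" unfolding D_def by measurable
  have Pm: "P \<in> borel_measurable (lebesgue \<Otimes>\<^sub>M lebesgue)" unfolding P_def F_def n_def by measurable
  have Qm: "Q \<in> borel_measurable (lebesgue \<Otimes>\<^sub>M lebesgue)" unfolding Q_def F_def n_def by measurable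
  have FPQ: "F (fst z) (snd z) = P z + Q z" for z unfolding P_def Q_def by auto
  have Fsym: "F x y = F y x" for x y unfolding F_def by (simp add: norm_minus_commute power2_commute)
  define Cin where "Cin = 2 powr \<bar>2 - n - 2 * s\<bar> * unit_ball_vol DIM('a) / (1 - (1/2) powr (2 - 2 * s))"
  define Cout where "Cout = unit_ball_vol DIM('a) * 2 ^ DIM('a) / (1 - (1/2) powr (2 * s))"
  define Cst where "Cst = K\<^sup>2 * Cin * (1/2) powr (2 - 2 * s) + 4 * A\<^sup>2 * Cout * 2 powr (2 * s)"
  have G: "(\<integral>\<^sup>+y. P (x, y) \<partial>lebesgue) \<le> ennreal Cst * indicator \<Omega> x" for x
  proof (cases "x \<in> \<Omega>")
    case False
    have "D x = 0" using False D_out unfolding D_def by auto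
    have "P (x, y) = 0" for y
    proof (cases "D y \<le> D x")
      case True
      then have "D y = 0" using \<open>D x = 0\<close> Dnn[of y] by linarith
      then have "y \<notin> \<Omega>" using D_pos[OF \<Omega>o \<Omega>b, of y] unfolding D_def by auto
      then show ?thesis using False vz unfolding P_def F_def by simp
    qed (simp add: P_def)
    then show ?thesis by simp
  next
    case True
    define r where "r = D x"
    have r: "r > 0" using D_pos[OF \<Omega>o \<Omega>b True] unfolding r_def D_def .
    define e where "e = 2 - n - 2 * s"
    define c1 where "c1 = K\<^sup>2 * r powr (2 * s - 2)"
    define c2 where "c2 = 4 * A\<^sup>2 * r powr (2 * s)"
    have c1: "c1 \<ge> 0" and c2: "c2 \<ge> 0" unfolding c1_def c2_def by auto
    have pw: "P (x, y) \<le> ennreal c1 * (indicator (ball x (r/2)) y * ennreal (dist x y powr e))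
        + ennreal c2 * (indicator (- ball x (r/2)) y * ennreal (dist x y powr (-(n + 2 * s))))" for y
    proof (cases "D y \<le> D x")
      case False then show ?thesis by (simp add: P_def)
    next
      case Dy: True
      show ?thesis
      proof (cases "dist x y < r/2")
        case near_case: True
        show ?thesis
        proof (cases "y = x")
          case True then show ?thesis by (simp add: P_def F_def)
        next
          case False
          define t where "t = dist x y"
          have t: "t > 0" using False unfolding t_def by simp
          have "\<bar>v x - v y\<bar> \<le> K * t * r powr (s - 1)"
            using near[OF \<open>x \<in> \<Omega>\<close>, of y] near_case unfolding t_def r_def D_def by simp
          then have "(v x - v y)\<^sup>2 \<le> (K * t * r powr (s - 1))\<^sup>2"
            by (metis abs_ge_zero power2_abs power_mono)
          also have "\<dots> = c1 * t powr 2"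
          proof -
            have "(r powr (s - 1))\<^sup>2 = r powr (2 * s - 2)"
              by (simp add: power2_eq_square powr_add[symmetric])
            moreover have "t\<^sup>2 = t powr 2" using powr_realpow[OF t, of 2] by simp
            ultimately show ?thesis unfolding c1_def by (simp add: power_mult_distrib)
          qed
          finally have h1: "(v x - v y)\<^sup>2 \<le> c1 * t powr 2" .
          have "(v x - v y)\<^sup>2 / norm (x - y) powr (n + 2 * s) \<le> c1 * t powr 2 / t powr (n + 2 * s)"
            using h1 t by (simp add: t_def dist_norm divide_right_mono)
          also have "\<dots> = c1 * t powr e"
          proof -
            have ee: "e = 2 - (n + 2 * s)" unfolding e_def by simp
            have "t powr e = t powr 2 / t powr (n + 2 * s)" unfolding ee by (rule powr_diff)
            then show ?thesis by (simp only: times_divide_eq_right)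
          qed
          finally have "F x y \<le> ennreal (c1 * t powr e)" unfolding F_def by (rule ennreal_leI)
          also have "\<dots> = ennreal c1 * ennreal (t powr e)" using c1 by (simp add: ennreal_mult)
          finally show ?thesis using Dy near_case unfolding P_def t_def by (simp add: r_def)
        qed
      next
        case far: False
        define t where "t = dist x y"
        have t: "t > 0" using far r unfolding t_def by linarith
        have vx: "\<bar>v x\<bar> \<le> A * r powr s" using bnd[of x] unfolding r_def D_def .
        have "A * D y powr s \<le> A * r powr s"
          using A Dy Dnn[of y] s0 unfolding r_def by (intro mult_left_mono powr_mono2) auto
        then have vy: "\<bar>v y\<bar> \<le> A * r powr s" using bnd[of y] unfolding D_def by linarith
        have "\<bar>v x - v y\<bar> \<le> 2 * (A * r powr s)" using vx vy by linarith
        then have "(v x - v y)\<^sup>2 \<le> (2 * (A * r powr s))\<^sup>2"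
          by (metis abs_ge_zero power2_abs power_mono)
        also have "\<dots> = c2"
        proof -
          have "(r powr s)\<^sup>2 = r powr (2 * s)"
            by (simp add: power2_eq_square powr_add[symmetric])
          then show ?thesis unfolding c2_def by (simp add: power_mult_distrib)
        qed
        finally have h2: "(v x - v y)\<^sup>2 \<le> c2" .
        have "(v x - v y)\<^sup>2 / norm (x - y) powr (n + 2 * s) \<le> c2 / t powr (n + 2 * s)"
          using h2 t by (simp add: t_def dist_norm divide_right_mono)
        also have "\<dots> = c2 * t powr (-(n + 2 * s))"
          by (simp only: powr_minus divide_inverse)
        finally have "F x y \<le> ennreal (c2 * t powr (-(n + 2 * s)))" unfolding F_def by (rule ennreal_leI)
        also have "\<dots> = ennreal c2 * ennreal (t powr (-(n + 2 * s)))" using c2 by (simp add: ennreal_mult)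
        finally show ?thesis using Dy far unfolding P_def t_def by simp
      qed
    qed
    have r2: "r / 2 > 0" using r by simp
    have en: "e + real DIM('a) = 2 - 2 * s" unfolding e_def n_def by simp
    have I1: "(\<integral>\<^sup>+y. indicator (ball x (r/2)) y * ennreal (dist x y powr e) \<partial>lebesgue)
       \<le> ennreal (Cin * (r/2) powr (2 - 2 * s))"
    proof -
      have "(\<integral>\<^sup>+y. indicator (ball x (r/2)) y * ennreal (dist x y powr e) \<partial>lebesgue)
        \<le> ennreal (2 powr \<bar>e\<bar> * unit_ball_vol DIM('a) * (r/2) powr (e + real DIM('a)) / (1 - (1/2) powr (e + real DIM('a))))"
        using s1 by (intro inner_int r2) (simp add: en)
      also have "\<dots> = ennreal (Cin * (r/2) powr (2 - 2 * s))"
        by (simp add: Cin_def e_def n_def)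
      finally show ?thesis .
    qed
    have I2: "(\<integral>\<^sup>+y. indicator (- ball x (r/2)) y * ennreal (dist x y powr (-(n + 2 * s))) \<partial>lebesgue)
       \<le> ennreal (Cout * (r/2) powr (-(2 * s)))"
    proof -
      have "(\<integral>\<^sup>+y. indicator (- ball x (r/2)) y * ennreal (dist x y powr (-(real DIM('a) + 2 * s))) \<partial>lebesgue)
        \<le> ennreal (unit_ball_vol DIM('a) * 2^DIM('a) * (r/2) powr (-(2 * s)) / (1 - (1/2) powr (2 * s)))"
        using s0 by (intro outer_int r2) simp
      then show ?thesis unfolding Cout_def n_def by simp
    qed
    have m1: "(\<lambda>y. indicator (ball x (r/2)) y * ennreal (dist x y powr e)) \<in> borel_measurable lebesgue"
    proof -
      have [measurable]: "ball x (r/2) \<in> sets lebesgue" by simp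
      show ?thesis by measurable
    qed
    have m2: "(\<lambda>y. indicator (- ball x (r/2)) y * ennreal (dist x y powr (-(n + 2 * s)))) \<in> borel_measurable lebesgue"
    proof -
      have [measurable]: "- ball x (r/2) \<in> sets lebesgue" by simp
      show ?thesis by measurable
    qed
    have "(\<integral>\<^sup>+y. P (x, y) \<partial>lebesgue) \<le> (\<integral>\<^sup>+y. ennreal c1 * (indicator (ball x (r/2)) y * ennreal (dist x y powr e))
        + ennreal c2 * (indicator (- ball x (r/2)) y * ennreal (dist x y powr (-(n + 2 * s)))) \<partial>lebesgue)"
      by (intro nn_integral_mono pw)
    also have "\<dots> = ennreal c1 * (\<integral>\<^sup>+y. indicator (ball x (r/2)) y * ennreal (dist x y powr e) \<partial>lebesgue)
        + ennreal c2 * (\<integral>\<^sup>+y. indicator (- ball x (r/2)) y * ennreal (dist x y powr (-(n + 2 * s))) \<partial>lebesgue)"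
      using m1 m2 by (simp add: nn_integral_add nn_integral_cmult)
    also have "\<dots> \<le> ennreal c1 * ennreal (Cin * (r/2) powr (2 - 2 * s)) + ennreal c2 * ennreal (Cout * (r/2) powr (-(2 * s)))"
      by (intro add_mono mult_left_mono I1 I2) auto
    also have "\<dots> = ennreal Cst"
    proof -
      have Cin0: "Cin \<ge> 0" unfolding Cin_def using half_powr_lt1[of "2 - 2 * s"] s1
        by (intro divide_nonneg_nonneg mult_nonneg_nonneg) auto
      have Cout0: "Cout \<ge> 0" unfolding Cout_def using half_powr_lt1[of "2 * s"] s0
        by (intro divide_nonneg_nonneg mult_nonneg_nonneg) auto
      have e1: "c1 * (Cin * (r/2) powr (2 - 2 * s)) = K\<^sup>2 * Cin * (1/2) powr (2 - 2 * s)"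
        using pr1[OF r, of "2 - 2 * s"] unfolding c1_def by (simp add: algebra_simps)
      have e2: "c2 * (Cout * (r/2) powr (-(2 * s))) = 4 * A\<^sup>2 * Cout * 2 powr (2 * s)"
      proof -
        have "c2 * (Cout * (r/2) powr (-(2 * s))) = 4 * A\<^sup>2 * Cout * (r powr (2 * s) * (r/2) powr (-(2 * s)))"
          unfolding c2_def by (simp only: mult_ac)
        then show ?thesis by (simp only: pr2[OF r])
      qed
      have "ennreal c1 * ennreal (Cin * (r/2) powr (2 - 2 * s)) + ennreal c2 * ennreal (Cout * (r/2) powr (-(2 * s)))
          = ennreal (c1 * (Cin * (r/2) powr (2 - 2 * s))) + ennreal (c2 * (Cout * (r/2) powr (-(2 * s))))"
        using c1 c2 Cin0 Cout0 by (simp add: ennreal_mult)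
      also have "\<dots> = ennreal Cst" unfolding e1 e2 Cst_def
        using Cin0 Cout0 by (intro ennreal_plus[symmetric]) auto
      finally show ?thesis .
    qed
    finally show ?thesis using True by simp
  qed
  have eq: "(\<integral>\<^sup>+z. F (fst z) (snd z) \<partial>(lebesgue \<Otimes>\<^sub>M lebesgue)) = integral\<^sup>N (lebesgue \<Otimes>\<^sub>M lebesgue) P + integral\<^sup>N (lebesgue \<Otimes>\<^sub>M lebesgue) Q"
    unfolding FPQ by (rule nn_integral_add[OF Pm Qm])
  have IP: "integral\<^sup>N (lebesgue \<Otimes>\<^sub>M lebesgue) P = (\<integral>\<^sup>+x. \<integral>\<^sup>+y. P (x, y) \<partial>lebesgue \<partial>lebesgue)"
    by (rule sigma_finite_measure.nn_integral_fst[OF sigma_finite_lebesgue Pm, symmetric])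
  have IQ: "integral\<^sup>N (lebesgue \<Otimes>\<^sub>M lebesgue) Q = (\<integral>\<^sup>+y. \<integral>\<^sup>+x. Q (x, y) \<partial>lebesgue \<partial>lebesgue)"
    by (rule pair_sigma_finite.nn_integral_snd[OF leb_pair Qm, symmetric])
  have Qle: "(\<integral>\<^sup>+y. \<integral>\<^sup>+x. Q (x, y) \<partial>lebesgue \<partial>lebesgue) \<le> (\<integral>\<^sup>+y. \<integral>\<^sup>+x. P (y, x) \<partial>lebesgue \<partial>lebesgue)"
    by (intro nn_integral_mono) (auto simp: P_def Q_def Fsym)
  have bound: "(\<integral>\<^sup>+x. \<integral>\<^sup>+y. P (x, y) \<partial>lebesgue \<partial>lebesgue) \<le> ennreal Cst * emeasure lebesgue \<Omega>"
  proof -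
    have "(\<integral>\<^sup>+x. \<integral>\<^sup>+y. P (x, y) \<partial>lebesgue \<partial>lebesgue) \<le> (\<integral>\<^sup>+x. ennreal Cst * indicator \<Omega> x \<partial>lebesgue)"
      by (intro nn_integral_mono G)
    also have "\<dots> = ennreal Cst * emeasure lebesgue \<Omega>" by (rule nn_integral_cmult_indicator[OF \<Omega>meas])
    finally show ?thesis .
  qed
  have "(\<integral>\<^sup>+z. F (fst z) (snd z) \<partial>(lebesgue \<Otimes>\<^sub>M lebesgue)) \<le> ennreal Cst * emeasure lebesgue \<Omega> + ennreal Cst * emeasure lebesgue \<Omega>"
    unfolding eq IP IQ by (rule add_mono[OF bound order_trans[OF Qle bound]])
  also have "\<dots> < \<infinity>" using fin\<Omega> by (simp add: ennreal_mult_less_top)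
  finally have fin: "(\<integral>\<^sup>+z. F (fst z) (snd z) \<partial>(lebesgue \<Otimes>\<^sub>M lebesgue)) < \<infinity>" .
  have "Hs_seminorm_sq s v < \<infinity>"
    using fin unfolding Hs_seminorm_sq_def F_def n_def by (simp add: ennreal_mult_less_top)
  then show ?thesis unfolding Hs_def using L2 vm by simp
qed

lemma powr_diff_le1:
  fixes a b s :: real
  assumes "0 < b" "b \<le> a" "0 \<le> s" "s \<le> 1"
  shows "a powr s - b powr s \<le> b powr (s - 1) * (a - b)"
proof -
  have ab: "a / b \<ge> 1" using assms by simp
  have "(a / b) powr s \<le> (a / b) powr 1" using ab assms by (intro powr_mono) auto
  then have "(a / b) powr s \<le> a / b" using assms by simp
  then have "a powr s / b powr s \<le> a / b" using assms by (simp add: powr_divide)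
  then have "a powr s \<le> b powr s * (a / b)" using assms by (simp add: divide_le_eq mult.commute)
  also have "b powr s = b powr (s - 1) * b" using assms by (simp add: powr_diff)
  finally have "a powr s \<le> b powr (s - 1) * a" using assms by (simp add: field_simps)
  moreover have "b powr s = b powr (s - 1) * b" using assms by (simp add: powr_diff)
  ultimately show ?thesis by (simp add: right_diff_distrib)
qed

lemma powr_diff_abs:
  fixes a b s :: real
  assumes "0 < a" "0 < b" "0 \<le> s" "s \<le> 1"
  shows "\<bar>a powr s - b powr s\<bar> \<le> min a b powr (s - 1) * \<bar>a - b\<bar>"
proof (cases "b \<le> a")
  case True
  have "a powr s - b powr s \<le> b powr (s - 1) * (a - b)" using powr_diff_le1[of b a s] True assms by simp
  moreover have "b powr s \<le> a powr s" using True assms by (intro powr_mono2) auto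
  ultimately show ?thesis using True by (simp add: min_def)
next
  case False
  have "b powr s - a powr s \<le> a powr (s - 1) * (b - a)" using powr_diff_le1[of a b s] False assms by simp
  moreover have "a powr s \<le> b powr s" using False assms by (intro powr_mono2) auto
  ultimately show ?thesis using False by (simp add: min_def)
qed

lemma seg_lip:
  fixes \<phi> :: "'a::euclidean_space \<Rightarrow> real"
  assumes fin: "finite \<K>" and cl: "\<And>K. K \<in> \<K> \<Longrightarrow> closed K"
    and aff: "\<And>K z. K \<in> \<K> \<Longrightarrow> z \<in> K \<Longrightarrow> \<phi> z = a K \<bullet> z + b K"
    and seg: "closed_segment x y \<subseteq> \<Union>\<K>"
  shows "\<bar>\<phi> x - \<phi> y\<bar> \<le> (\<Sum>K\<in>\<K>. norm (a K)) * dist x y"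
proof -
  define L where "L = (\<Sum>K\<in>\<K>. norm (a K))"
  have L0: "L \<ge> 0" unfolding L_def by (simp add: sum_nonneg)
  define p where "p t = x + t *\<^sub>R (y - x)" for t :: real
  define g where "g t = \<phi> (p t)" for t
  define U where "U K = p -` K" for K
  have contp: "continuous (at t) p" for t unfolding p_def by (intro continuous_intros)
  have "lipschitz_on (L * dist x y) {0..1} g"
  proof (rule lipschitz_on_closed_Union[where I=\<K> and U=U])
    fix K assume K: "K \<in> \<K>"
    show "closed (U K)" unfolding U_def by (intro continuous_closed_vimage cl K contp)
    show "lipschitz_on (L * dist x y) (U K) g"
    proof (rule lipschitz_onI)
      fix t t' assume t: "t \<in> U K" and t': "t' \<in> U K"
      have "g t - g t' = a K \<bullet> ((t - t') *\<^sub>R (y - x))"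
        using aff[OF K, of "p t"] aff[OF K, of "p t'"] t t' unfolding g_def U_def p_def
        by (simp add: inner_diff_right algebra_simps scaleR_diff_left)
      then have "\<bar>g t - g t'\<bar> \<le> norm (a K) * (\<bar>t - t'\<bar> * norm (y - x))"
        using Cauchy_Schwarz_ineq2[of "a K" "(t - t') *\<^sub>R (y - x)"] by simp
      also have "\<dots> \<le> L * (\<bar>t - t'\<bar> * norm (y - x))"
        unfolding L_def using member_le_sum[of K \<K> "\<lambda>K. norm (a K)"] K fin
        by (intro mult_right_mono) auto
      finally show "dist (g t) (g t') \<le> L * dist x y * dist t t'"
        by (simp add: dist_real_def dist_norm norm_minus_commute mult_ac)
    qed (use L0 in simp)
  next
    show "{0..1} \<subseteq> (\<Union>K\<in>\<K>. U K)"
    proof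
      fix t :: real assume "t \<in> {0..1}"
      then have "p t \<in> closed_segment x y" unfolding p_def closed_segment_def
        by (intro CollectI exI[of _ t]) (auto simp: algebra_simps)
      then show "t \<in> (\<Union>K\<in>\<K>. U K)" using seg unfolding U_def by auto
    qed
  qed (use fin L0 in auto)
  then have "dist (g 1) (g 0) \<le> L * dist x y * dist (1::real) 0"
    by (rule lipschitz_onD) auto
  then show ?thesis unfolding g_def p_def L_def by (simp add: dist_real_def abs_minus_commute)
qed

theorem lemma1p1:
  fixes \<Omega> :: "'a::euclidean_space set" and s h :: real
    and \<delta> :: "'a \<Rightarrow> real" and T :: "'a set set"
  assumes "bounded \<Omega>" and "open \<Omega>" and "C11_boundary \<Omega>"
    and "0 < s" and "s < 1"
    and "assumption_A_delta_1 \<Omega> \<delta>"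
    and "h > 0" and "over_triangulation \<Omega> h T"
  shows "Vh s \<Omega> \<delta> T \<subseteq> Vspace s \<Omega>"
proof
  fix v assume "v \<in> Vh s \<Omega> \<delta> T"
  then obtain \<phi> where \<phi>PL: "\<phi> \<in> PL T" and vin: "\<And>x. x \<in> \<Omega> \<Longrightarrow> v x = \<delta> x powr s * \<phi> x"
    and vz: "\<And>x. x \<notin> \<Omega> \<Longrightarrow> v x = 0"
    unfolding Vh_def by blast
  note \<Omega>b = assms(1) and \<Omega>o = assms(2) and s0 = assms(4) and s1 = assms(5)
  define D where "D = d_Omega \<Omega>"
  have Dnn: "D x \<ge> 0" for x unfolding D_def by (rule D_nonneg)
  obtain Dm where Dm: "Dm > 0" "\<And>x. D x \<le> Dm" using D_bounded[OF \<Omega>b] unfolding D_def by blast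
  have \<delta>nn: "\<And>x. \<delta> x \<ge> 0" using assms(6) unfolding assumption_A_delta_1_def by blast
  obtain L\<delta> where L\<delta>: "L\<delta>-lipschitz_on (closure \<Omega>) \<delta>"
    using assms(6) unfolding assumption_A_delta_1_def by blast
  have L\<delta>0: "L\<delta> \<ge> 0" using L\<delta> by (rule lipschitz_on_nonneg)
  obtain c where c: "c > 0" "\<And>x. D x / c \<le> \<delta> x" "\<And>x. \<delta> x \<le> c * D x"
    using assms(6) unfolding assumption_A_delta_1_def D_def by blast
  define \<K> where "\<K> = simplices_of T"
  have finT: "finite T" and cover: "closure \<Omega> \<subseteq> \<Union>\<K>" and simp: "\<And>S. S \<in> T \<Longrightarrow> is_simplex_vertices S"
    using assms(8) unfolding over_triangulation_def \<K>_def by auto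
  have fin\<K>: "finite \<K>" unfolding \<K>_def simplices_of_def using finT by simp
  have cl\<K>: "closed K" if K: "K \<in> \<K>" for K
  proof -
    obtain S where S: "S \<in> T" "K = convex hull S" using K unfolding \<K>_def simplices_of_def by blast
    have "finite S" using simp[OF S(1)] unfolding is_simplex_vertices_def by simp
    then show ?thesis using S(2) by (simp add: finite_imp_compact_convex_hull compact_imp_closed)
  qed
  have contPL: "continuous_on (closure (Omega_h T)) \<phi>" and affPL: "\<forall>K\<in>\<K>. \<exists>a b. \<forall>x\<in>K. \<phi> x = a \<bullet> x + b"
    using \<phi>PL unfolding PL_def \<K>_def by auto
  then have "\<forall>K\<in>\<K>. \<exists>ab. \<forall>x\<in>K. \<phi> x = fst ab \<bullet> x + snd ab" by auto
  then obtain ab where ab: "\<And>K x. K \<in> \<K> \<Longrightarrow> x \<in> K \<Longrightarrow> \<phi> x = fst (ab K) \<bullet> x + snd (ab K)"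
    by metis
  define L\<phi> where "L\<phi> = (\<Sum>K\<in>\<K>. norm (fst (ab K)))"
  have L\<phi>0: "L\<phi> \<ge> 0" unfolding L\<phi>_def by (simp add: sum_nonneg)
  have \<Omega>h: "\<Omega> \<subseteq> Omega_h T" unfolding Omega_h_def
    using cover closure_subset[of \<Omega>] \<Omega>o unfolding \<K>_def by (intro interior_maximal) auto
  have cl\<Omega>h: "closure \<Omega> \<subseteq> closure (Omega_h T)" using \<Omega>h by (rule closure_mono)
  have cont\<phi>: "continuous_on (closure \<Omega>) \<phi>" using contPL cl\<Omega>h by (rule continuous_on_subset)
  obtain M\<phi> where M\<phi>: "M\<phi> > 0" "\<And>x. x \<in> closure \<Omega> \<Longrightarrow> \<bar>\<phi> x\<bar> \<le> M\<phi>"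
  proof -
    have "compact (closure \<Omega>)" using \<Omega>b by (simp add: compact_closure)
    then have "bounded (\<phi> ` closure \<Omega>)" using cont\<phi> by (intro compact_imp_bounded compact_continuous_image)
    then obtain B where "B > 0" "\<forall>y\<in>\<phi> ` closure \<Omega>. norm y \<le> B" using bounded_pos by metis
    then show ?thesis using that by auto
  qed
  have \<delta>pos: "\<delta> x > 0" if "x \<in> \<Omega>" for x
  proof -
    have "D x > 0" using D_pos[OF \<Omega>o \<Omega>b that] unfolding D_def .
    then have "D x / c > 0" using c by simp
    then show ?thesis using c(2)[of x] by linarith
  qed
  have vm: "v \<in> borel_measurable lebesgue"
  proof -
    have cont\<delta>: "continuous_on \<Omega> \<delta>"
      using lipschitz_on_continuous_on[OF L\<delta>] closure_subset by (rule continuous_on_subset)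
    have "continuous_on \<Omega> (\<lambda>x. \<delta> x powr s * \<phi> x)"
      using cont\<delta> cont\<phi> closure_subset \<delta>pos
      by (intro continuous_intros continuous_on_subset[OF cont\<phi>] closure_subset) (auto simp: less_imp_neq[symmetric])
    then have "(\<lambda>x. indicator \<Omega> x *\<^sub>R (\<delta> x powr s * \<phi> x)) \<in> borel_measurable borel"
      using \<Omega>o by (intro borel_measurable_continuous_on_indicator) auto
    moreover have "(\<lambda>x. indicator \<Omega> x *\<^sub>R (\<delta> x powr s * \<phi> x)) = v"
      using vin vz by (auto simp: indicator_def)
    ultimately show ?thesis using lift_leb by metis
  qed
  define A where "A = c powr s * M\<phi>"
  have A0: "A \<ge> 0" unfolding A_def using M\<phi> by simp
  have bnd: "\<bar>v y\<bar> \<le> A * d_Omega \<Omega> y powr s" for y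
  proof (cases "y \<in> \<Omega>")
    case True
    have "\<delta> y powr s \<le> (c * D y) powr s" using c(3)[of y] \<delta>nn[of y] s0 by (intro powr_mono2) auto
    also have "\<dots> = c powr s * D y powr s" using c Dnn[of y] by (simp add: powr_mult)
    finally have h: "\<delta> y powr s \<le> c powr s * D y powr s" .
    have "\<bar>v y\<bar> = \<delta> y powr s * \<bar>\<phi> y\<bar>" using vin[OF True] by (simp add: abs_mult)
    also have "\<dots> \<le> (c powr s * D y powr s) * M\<phi>"
      using h M\<phi>(2)[of y] True closure_subset[of \<Omega>] by (intro mult_mono) auto
    finally show ?thesis unfolding A_def D_def by (simp add: mult_ac)
  next
    case False then show ?thesis using vz A0 by simp
  qed
  define B where "B = (c * Dm) powr s"
  have B0: "B \<ge> 0" unfolding B_def by simp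
  define K where "K = (1 / (2 * c)) powr (s - 1) * L\<delta> * M\<phi> + B * L\<phi> * Dm powr (1 - s)"
  have K0: "K \<ge> 0" unfolding K_def B_def using L\<delta>0 M\<phi> L\<phi>0 by simp
  have near: "\<bar>v x - v y\<bar> \<le> K * dist x y * d_Omega \<Omega> x powr (s - 1)"
    if x: "x \<in> \<Omega>" and xy: "dist x y < d_Omega \<Omega> x / 2" for x y
  proof -
    define r where "r = D x"
    have r: "r > 0" using D_pos[OF \<Omega>o \<Omega>b x] unfolding r_def D_def .
    have y: "y \<in> \<Omega>" using D_ball[OF x, of y] xy r unfolding r_def D_def by simp
    have Dy: "D y \<ge> r / 2" using D_lip[of \<Omega> x y] xy unfolding r_def D_def by linarith
    have dx: "\<delta> x \<ge> r / (2 * c)" using c(2)[of x] c(1) r unfolding r_def by (simp add: field_simps)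
    have dy: "\<delta> y \<ge> r / (2 * c)" using c(2)[of y] c(1) Dy by (simp add: field_simps)
    have rc: "r / (2 * c) > 0" using r c by simp
    have mpos: "min (\<delta> x) (\<delta> y) \<ge> r / (2 * c)" using dx dy by simp
    have "min (\<delta> x) (\<delta> y) powr (s - 1) \<le> (r / (2 * c)) powr (s - 1)"
      using mpos rc s1 by (intro powr_mono2') auto
    also have "\<dots> = (1 / (2 * c)) powr (s - 1) * r powr (s - 1)"
      using r c by (simp add: powr_mult[symmetric])
    finally have mb: "min (\<delta> x) (\<delta> y) powr (s - 1) \<le> (1 / (2 * c)) powr (s - 1) * r powr (s - 1)" .
    have ld: "\<bar>\<delta> x - \<delta> y\<bar> \<le> L\<delta> * dist x y"
      using lipschitz_onD[OF L\<delta>, of x y] x y closure_subset[of \<Omega>] by (auto simp: dist_real_def)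
    have t1: "\<bar>\<delta> x powr s - \<delta> y powr s\<bar> \<le> (1 / (2 * c)) powr (s - 1) * r powr (s - 1) * (L\<delta> * dist x y)"
    proof -
      have "\<bar>\<delta> x powr s - \<delta> y powr s\<bar> \<le> min (\<delta> x) (\<delta> y) powr (s - 1) * \<bar>\<delta> x - \<delta> y\<bar>"
        using \<delta>pos[OF x] \<delta>pos[OF y] s0 s1 by (intro powr_diff_abs) auto
      also have "\<dots> \<le> (1 / (2 * c)) powr (s - 1) * r powr (s - 1) * (L\<delta> * dist x y)"
        using mb ld by (intro mult_mono) auto
      finally show ?thesis .
    qed
    have segsub: "closed_segment x y \<subseteq> \<Union>\<K>"
    proof -
      have "closed_segment x y \<subseteq> ball x (D x)"
        using xy r by (intro closed_segment_subset) (auto simp: r_def D_def)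
      also have "\<dots> \<subseteq> \<Omega>" using D_ball[OF x] unfolding D_def by auto
      finally show ?thesis using cover closure_subset[of \<Omega>] by auto
    qed
    have lp: "\<bar>\<phi> x - \<phi> y\<bar> \<le> L\<phi> * dist x y"
      unfolding L\<phi>_def by (rule seg_lip[OF fin\<K> cl\<K> ab segsub]) auto
    have dyB: "\<delta> y powr s \<le> B"
    proof -
      have "\<delta> y \<le> c * Dm" using c(3)[of y] Dm(2)[of y] c(1) by (meson mult_left_mono less_imp_le order_trans)
      then show ?thesis unfolding B_def using \<delta>nn[of y] s0 by (intro powr_mono2) auto
    qed
    have one: "1 \<le> Dm powr (1 - s) * r powr (s - 1)"
    proof -
      have "Dm powr (s - 1) \<le> r powr (s - 1)" using Dm(2)[of x] r s1 unfolding r_def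
        by (intro powr_mono2') auto
      then have "Dm powr (1 - s) * Dm powr (s - 1) \<le> Dm powr (1 - s) * r powr (s - 1)"
        by (intro mult_left_mono) auto
      moreover have "Dm powr (1 - s) * Dm powr (s - 1) = 1" using Dm(1) by (simp add: powr_add[symmetric])
      ultimately show ?thesis by simp
    qed
    have "v x - v y = (\<delta> x powr s - \<delta> y powr s) * \<phi> x + \<delta> y powr s * (\<phi> x - \<phi> y)"
      using vin[OF x] vin[OF y] by (simp add: algebra_simps)
    then have "\<bar>v x - v y\<bar> \<le> \<bar>\<delta> x powr s - \<delta> y powr s\<bar> * \<bar>\<phi> x\<bar> + \<delta> y powr s * \<bar>\<phi> x - \<phi> y\<bar>"
      by (simp add: abs_mult) (metis abs_mult abs_triangle_ineq abs_of_nonneg powr_ge_zero)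
    also have "\<dots> \<le> ((1 / (2 * c)) powr (s - 1) * r powr (s - 1) * (L\<delta> * dist x y)) * M\<phi> + B * (L\<phi> * dist x y)"
      using t1 M\<phi>(2)[of x] x closure_subset[of \<Omega>] dyB lp L\<phi>0 B0
      by (intro add_mono mult_mono) auto
    also have "\<dots> \<le> ((1 / (2 * c)) powr (s - 1) * r powr (s - 1) * (L\<delta> * dist x y)) * M\<phi>
                  + B * (L\<phi> * dist x y) * (Dm powr (1 - s) * r powr (s - 1))"
      using one mult_nonneg_nonneg[OF B0 mult_nonneg_nonneg[OF L\<phi>0 zero_le_dist[of x y]]] by (intro add_left_mono mult_le_cancel_left1[THEN iffD2]) (auto simp: not_less)
    also have "\<dots> = K * dist x y * r powr (s - 1)" unfolding K_def by (simp add: algebra_simps)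
    finally show ?thesis unfolding r_def D_def .
  qed
  have "v \<in> Hs s"
    by (rule Hs_abstract[OF \<Omega>o \<Omega>b s0 s1 vm vz A0 bnd K0 near])
  then show "v \<in> Vspace s \<Omega>" unfolding Vspace_def using vz by auto
qed

end
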